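(* For every positive integer $m$, \begin{align*} \zeta^\star(\bar 1,\{1\}_m,\bar 1)=&\frac{(-1)^m}{m!}\zeta(2)\ln^m(2)\\ &-\frac{(-1)^m}{(m+1)!}\sum_{i=1}^{m}(-1)^{i+1}\, i!\binom{m+1}{i}(\ln 2)^{m+1-i}\Big\{\zeta^\star(\bar 1,\{1\}_{i-1},\bar 1)-\zeta^\star(\bar 1,\{1\}_i)\Big\}\\ &+\frac{(-1)^m}{m!}\sum_{k=1}^{m}\binom{m}{k}(-1)^{k+1}\left\{\sum_{l=1}^{k} l!\binom{k}{l}(\ln 2)^{m-l}\,\mathrm{Li}_{l+2}\!\left(\tfrac12\right)-k!(\ln 2)^{m-k}\zeta(k+2)\right\}, \end{align*} where $\zeta^\star(\bar 1,\bar 1)=\frac{\zeta(2)+\ln^2(2)}{2}$.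
   Context: For nonzero integers $s_1,\dots,s_k$, with $\operatorname{sgn}(s)=1$ if $s>0$ and $-1$ if $s<0$, the multiple zeta star value is $\zeta^\star(s_1,\dots,s_k)=\sum_{n_1\ge n_2\ge\cdots\ge n_k\ge 1}\prod_{j=1}^k n_j^{-|s_j|}\operatorname{sgn}(s_j)^{n_j}$ (convergent when $s_1\neq 1$). A barred entry $\bar p$ denotes the negative entry $-p$, e.g. $\zeta^\star(\bar 1,1,\bar 1)=\zeta^\star(-1,1,-1)$. The notation $\{s\}_d$ means the entry $s$ repeated $d$ times ($d=0$ means no entries). $\zeta(s)=\sum_{n\ge1}n^{-s}$ is the Riemann zeta function and $\mathrm{Li}_s(x)=\sum_{n\ge1}x^n/n^s$ is the polylogarithm. *)

theory Defs
  imports Complex_Main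
begin

text \<open>Truncated multiple zeta star sum with signed entries:
  zstar_trunc N [s1,...,sk] = sum over N >= n1 >= n2 >= ... >= nk >= 1 of
  prod_j sgn(s_j)^(n_j) / n_j^|s_j|.\<close>
fun zstar_trunc :: "nat \<Rightarrow> int list \<Rightarrow> real" where
  "zstar_trunc N [] = 1"
| "zstar_trunc N (s # ss) =
     (\<Sum>n = 1..N. (sgn (real_of_int s)) ^ n / (real n) ^ (nat \<bar>s\<bar>) * zstar_trunc n ss)"

definition zeta_star :: "int list \<Rightarrow> real" where
  "zeta_star ss = lim (\<lambda>N. zstar_trunc N ss)"

definition rzeta :: "nat \<Rightarrow> real" where
  "rzeta k = (\<Sum>n. 1 / (real (Suc n)) ^ k)"

definition polylog :: "nat \<Rightarrow> real \<Rightarrow> real" where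
  "polylog s x = (\<Sum>n. x ^ Suc n / (real (Suc n)) ^ s)"

end

theory Submission
  imports Defs "HOL-Analysis.Analysis"
begin


lemma u_ln_tendsto: "((\<lambda>u::real. u * (-ln u)^k) \<longlongrightarrow> 0) (at_right 0)"
proof -
  have 1: "filterlim (\<lambda>u::real. -ln u) at_top (at_right 0)"
    using ln_at_0 filterlim_uminus_at_bot by blast
  have 2: "((\<lambda>s::real. s^k / exp s) \<longlongrightarrow> 0) at_top" by (rule tendsto_power_div_exp_0)
  have 3: "((\<lambda>u::real. (-ln u)^k / exp (-ln u)) \<longlongrightarrow> 0) (at_right 0)"
    using filterlim_compose[OF 2 1] by simp
  have "eventually (\<lambda>u::real. (-ln u)^k / exp (-ln u) = u * (-ln u)^k) (at_right 0)"
    using eventually_at_right_less[of "0::real"]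
    by eventually_elim (simp add: exp_minus field_simps)
  then show ?thesis using 3 tendsto_cong by fastforce
qed

lemma cont_pow_ln:
  assumes "j \<ge> 1"
  shows "continuous_on {0..1} (\<lambda>u::real. u^j * (-ln u)^k)"
  unfolding continuous_on_eq_continuous_within
proof
  fix x :: real assume x: "x \<in> {0..1}"
  show "continuous (at x within {0..1}) (\<lambda>u::real. u^j * (-ln u)^k)"
  proof (cases "x = 0")
    case False
    then have "x > 0" using x by auto
    then have "continuous (at x) (\<lambda>u::real. u^j * (-ln u)^k)"
      by (intro continuous_intros) auto
    then show ?thesis using continuous_at_imp_continuous_at_within by blast
  next
    case True
    have "((\<lambda>u::real. u^j * (-ln u)^k) \<longlongrightarrow> 0) (at_right 0)"
    proof (rule Lim_null_comparison[OF _ u_ln_tendsto[of k]])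
      show "\<forall>\<^sub>F u in at_right 0. norm (u ^ j * (- ln u) ^ k) \<le> u * (- ln u) ^ k"
      proof -
        have "eventually (\<lambda>u::real. 0 < u \<and> u < 1) (at_right 0)"
          by (subst eventually_at_right[of 0 1]) (auto intro: exI[of _ 1])
        then show ?thesis
        proof eventually_elim
          case (elim u)
          then have "-ln u \<ge> 0" by simp
          moreover have "u^j \<le> u" using elim assms
            by (metis less_eq_real_def power_decreasing power_one_right)
          ultimately have L: "0 \<le> (-ln u)^k" "u^j \<le> u" by simp_all
          have "norm (u^j * (-ln u)^k) = u^j * (-ln u)^k"
          proof -
            have "0 \<le> u^j" using elim by simp
            then show ?thesis using L(1) by (simp only: real_norm_def abs_mult abs_of_nonneg)
          qed
          then show ?case using L by (simp add: mult_right_mono)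
        qed
      qed
    qed
    moreover have Z: "(0::real)^j * (- ln 0)^k = 0" using assms by simp
    ultimately show ?thesis unfolding True continuous_within at_within_Icc_at_right[OF zero_less_one]
      by (simp only: Z)
  qed
qed


primrec Gf :: "nat \<Rightarrow> nat \<Rightarrow> real \<Rightarrow> real" where
  "Gf j 0 u = u^j / real j"
| "Gf j (Suc p) u = real (Suc p) / real j * Gf j p u + u^j * (-ln u)^(Suc p) / real j"

lemma Gf_deriv:
  assumes "j \<ge> 1" "0 < u"
  shows "(Gf j p has_real_derivative u^(j-1) * (-ln u)^p) (at u)"
proof (induction p)
  case 0
  have "((\<lambda>u. u^j / real j) has_real_derivative real j * u^(j-1) / real j) (at u)"
    using assms by (intro derivative_eq_intros) auto
  then show ?case using assms by simp
next
  case (Suc p)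
  obtain j' where j: "j = Suc j'" using assms by (cases j) auto
  have dl: "((\<lambda>u. - ln u) has_real_derivative - (1/u)) (at u)"
    using assms by (auto intro!: derivative_eq_intros)
  have d4: "((\<lambda>u. (- ln u)^(Suc p)) has_real_derivative (1 + real p) * ((- (1/u)) * (- ln u)^p)) (at u)"
    by (rule DERIV_power_Suc[OF dl])
  have d2: "((\<lambda>u. u^j) has_real_derivative real j * u^(j - 1)) (at u)"
    using DERIV_pow[of j u] by simp
  have d5: "((\<lambda>u. u^j * (- ln u)^(Suc p)) has_real_derivative
       real j * u^(j - 1) * (- ln u)^(Suc p) + (1 + real p) * ((- (1/u)) * (- ln u)^p) * u^j) (at u)"
    by (rule DERIV_mult[OF d2 d4])
  have d6: "((\<lambda>u. real (Suc p) / real j * Gf j p u + u^j * (- ln u)^(Suc p) / real j) has_real_derivative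
       real (Suc p) / real j * (u^(j-1) * (-ln u)^p) +
       (real j * u^(j - 1) * (- ln u)^(Suc p) + (1 + real p) * ((- (1/u)) * (- ln u)^p) * u^j) / real j) (at u)"
    by (intro DERIV_add DERIV_cmult DERIV_cdivide d5 Suc.IH) 
  have e1: "(1 + real p) * ((- (1/u)) * (- ln u)^p) * u^j = - ((1 + real p) * (-ln u)^p * u^(j-1))"
    using assms unfolding j by (simp add: field_simps)
  have e2: "\<And>L X. real (Suc p)/real j*(X*L^p) + (real j * X * (L*L^p) - (1+real p)*L^p*X)/real j = X*(L*L^p)"
    using assms by (simp add: field_simps)
  have e: "real (Suc p) / real j * (u^(j-1) * (-ln u)^p) +
       (real j * u^(j - 1) * (- ln u)^(Suc p) + (1 + real p) * ((- (1/u)) * (- ln u)^p) * u^j) / real j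
      = u^(j-1) * (-ln u)^(Suc p)"
    unfolding e1 using e2[of "u^(j-1)" "-ln u"] by (simp add: algebra_simps add_divide_distrib diff_divide_distrib)
  have "Gf j (Suc p) = (\<lambda>u. real (Suc p) / real j * Gf j p u + u^j * (-ln u)^(Suc p) / real j)"
    by (rule ext) simp
  then show ?case using d6 e by simp
qed

lemma Gf_cont: "j \<ge> 1 \<Longrightarrow> continuous_on {0..1} (Gf j p)"
proof (induction p)
  case 0 then show ?case by (simp add: continuous_intros)
next
  case (Suc p)
  have "continuous_on {0..1} (\<lambda>u::real. u^j * (-ln u)^(Suc p))" using cont_pow_ln Suc by blast
  then have c3: "continuous_on {0..1} (\<lambda>u::real. u^j * (-ln u)^(Suc p) / real j)"
    using Suc.prems by (intro continuous_on_divide continuous_on_const) auto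
  have c2: "continuous_on {0..1} (\<lambda>u. real (Suc p) / real j * Gf j p u)"
    using Suc by (intro continuous_on_mult continuous_on_const) auto
  have "Gf j (Suc p) = (\<lambda>u. real (Suc p) / real j * Gf j p u + u^j * (-ln u)^(Suc p) / real j)"
    by (rule ext) simp
  then show ?case using continuous_on_add[OF c2 c3] by simp
qed

lemma Gf_0: "j \<ge> 1 \<Longrightarrow> Gf j p 0 = 0"
  by (induction p) auto

lemma Gf_1: "j \<ge> 1 \<Longrightarrow> Gf j p 1 = fact p / real j ^ (p+1)"
  by (induction p) (auto simp: field_simps)

definition lam :: "nat \<Rightarrow> real \<Rightarrow> real" where
  "lam p u = (- ln u)^p / fact p"

lemma int_mono_lam:
  assumes "j \<ge> 1"
  shows "((\<lambda>u. u^(j-1) * lam p u) has_integral 1 / real j ^ (p+1)) {0..1}"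
proof -
  have "((\<lambda>u. u^(j-1) * (-ln u)^p) has_integral (Gf j p 1 - Gf j p 0)) {0..1}"
  proof (rule fundamental_theorem_of_calculus_interior)
    show "continuous_on {0..1} (Gf j p)" using Gf_cont assms by blast
    fix x :: real assume "x \<in> {0<..<1}"
    then show "(Gf j p has_vector_derivative x ^ (j - 1) * (- ln x) ^ p) (at x)"
      using Gf_deriv[OF assms, of x p] by (simp add: has_real_derivative_iff_has_vector_derivative)
  qed simp
  then have "((\<lambda>u. u^(j-1) * (-ln u)^p) has_integral (fact p / real j ^ (p+1))) {0..1}"
    using Gf_0 Gf_1 assms by simp
  from has_integral_mult_right[OF this, of "1 / fact p"]
  show ?thesis unfolding lam_def by (simp add: field_simps)
qed


lemma lam_nonneg: "0 \<le> u \<Longrightarrow> u \<le> 1 \<Longrightarrow> 0 \<le> lam p u"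
  unfolding lam_def by (cases "u = 0") auto

lemma lam_1: "p \<ge> 1 \<Longrightarrow> lam p 1 = 0"
  unfolding lam_def by simp

lemma int_partial:
  "((\<lambda>u. (\<Sum>j<k. c^(Suc j) * u^j) * lam p u) has_integral (\<Sum>j<k. c^(Suc j) / real (Suc j) ^ (p+1))) {0..1}"
proof -
  have "((\<lambda>u. \<Sum>j<k. c^(Suc j) * (u^j * lam p u)) has_integral (\<Sum>j<k. c^(Suc j) * (1 / real (Suc j) ^ (p+1)))) {0..1}"
  proof (rule has_integral_sum)
    fix j assume "j \<in> {..<k}"
    have "((\<lambda>u. u^(Suc j - 1) * lam p u) has_integral 1 / real (Suc j) ^ (p+1)) {0..1}"
      by (rule int_mono_lam) simp
    from has_integral_mult_right[OF this, of "c^(Suc j)"]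
    show "((\<lambda>u. c^(Suc j) * (u^j * lam p u)) has_integral c^(Suc j) * (1 / real (Suc j) ^ (p+1))) {0..1}"
      by simp
  qed simp
  then show ?thesis by (simp add: sum_distrib_right mult.assoc)
qed

lemma int_series:
  assumes c: "0 < c" "c \<le> 1" and p: "p \<ge> 1"
  shows "((\<lambda>u. c / (1 - c * u) * lam p u) has_integral polylog (p+1) c) {0..1}"
proof -
  define f where "f k u = (\<Sum>j<k. c^(Suc j) * u^j) * lam p u" for k u
  define a where "a j = c^(Suc j) / real (Suc j) ^ (p+1)" for j
  have fi: "\<And>k. (f k has_integral (\<Sum>j<k. a j)) {0..1}"
    unfolding f_def a_def by (rule int_partial)
  have sa: "summable a"
  proof (rule summable_comparison_test[of _ "\<lambda>n. inverse (real (Suc n) ^ 2)"])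
    show "summable (\<lambda>n. inverse (real (Suc n) ^ 2))"
      using inverse_power_summable[of 2, where 'a=real] by (subst summable_Suc_iff) simp
    show "\<exists>N. \<forall>n\<ge>N. norm (a n) \<le> inverse (real (Suc n) ^ 2)"
    proof (intro exI allI impI)
      fix n :: nat
      have "c^(Suc n) \<le> 1" by (rule power_le_one) (use c in auto)
      moreover have "real (Suc n) ^ 2 \<le> real (Suc n) ^ (p+1)"
        using p by (intro power_increasing) auto
      ultimately have h: "c^(Suc n) \<le> 1" "real (Suc n) ^ 2 \<le> real (Suc n) ^ (p+1)" by auto
      have "norm (a n) = c^(Suc n) / real (Suc n)^(p+1)" using c by (simp add: a_def)
      also have "\<dots> \<le> 1 / real (Suc n)^(p+1)" by (rule divide_right_mono) (use h in auto)
      also have "\<dots> \<le> 1 / real (Suc n)^2" by (rule divide_left_mono) (use h in auto)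
      finally show "norm (a n) \<le> inverse (real (Suc n) ^ 2)" by (simp add: inverse_eq_divide)
    qed
  qed
  have mc: "(\<lambda>u. c / (1 - c * u) * lam p u) integrable_on {0..1} \<and>
     ((\<lambda>k. integral {0..1} (f k)) \<longlonglongrightarrow> integral {0..1} (\<lambda>u. c / (1 - c * u) * lam p u))"
  proof (rule monotone_convergence_increasing)
    show "\<And>k. f k integrable_on {0..1}" using fi by blast
    fix k :: nat and x :: real assume x: "x \<in> {0..1}"
    show "f k x \<le> f (Suc k) x"
      unfolding f_def using x c lam_nonneg[of x p]
      by (auto intro!: mult_right_mono)
  next
    fix x :: real assume x: "x \<in> {0..1}"
    show "(\<lambda>k. f k x) \<longlonglongrightarrow> c / (1 - c * x) * lam p x"
    proof (cases "c * x < 1")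
      case True
      have "(\<lambda>j. (c * x)^j) sums (1 / (1 - c * x))"
      proof (rule geometric_sums)
        have "0 \<le> c * x" using x c by simp
        then show "norm (c * x) < 1" using True by simp
      qed
      then have "(\<lambda>j. c * (c * x)^j) sums (c * (1 / (1 - c * x)))"
        by (rule sums_mult)
      then have "(\<lambda>k. \<Sum>j<k. c^(Suc j) * x^j) \<longlonglongrightarrow> c / (1 - c * x)"
        unfolding sums_def by (simp add: power_mult_distrib mult.assoc)
      then show ?thesis unfolding f_def by (intro tendsto_mult tendsto_const)
    next
      case False
      have "c * x \<le> x" using x c mult_right_mono[of c 1 x] by simp
      then have "x = 1" using False x by simp
      then show ?thesis unfolding f_def using lam_1[OF p] by simp
    qed
  next
    have "\<And>k. integral {0..1} (f k) = (\<Sum>j<k. a j)" using fi by blast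
    moreover have "\<And>k. 0 \<le> (\<Sum>j<k. a j)" unfolding a_def using c by (auto intro!: sum_nonneg)
    moreover have "\<And>k. (\<Sum>j<k. a j) \<le> suminf a"
      using sa unfolding a_def using c by (intro sum_le_suminf) auto
    ultimately show "bounded (range (\<lambda>k. integral {0..1} (f k)))"
      unfolding bounded_iff by (intro exI[of _ "suminf a"]) auto
  qed
  have "(\<lambda>k. integral {0..1} (f k)) \<longlonglongrightarrow> suminf a"
  proof -
    have "\<And>k. integral {0..1} (f k) = (\<Sum>j<k. a j)" using fi by (rule integral_unique)
    then show ?thesis using summable_LIMSEQ[OF sa] by simp
  qed
  then have "integral {0..1} (\<lambda>u. c / (1 - c * u) * lam p u) = suminf a"
    using mc LIMSEQ_unique by blast
  moreover have "suminf a = polylog (p+1) c" unfolding a_def polylog_def by simp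
  ultimately show ?thesis using mc by (metis has_integral_integrable_integral)
qed


lemma binom_poly: "(\<Sum>k=1..Suc n. real (n choose (k-1)) * x^(k-1)) = (1 + x :: real)^n"
proof -
  have "(\<Sum>k=1..Suc n. real (n choose (k-1)) * x^(k-1)) = (\<Sum>i=0..n. real (n choose i) * x^i)"
    unfolding One_nat_def sum.shift_bounds_cl_Suc_ivl by simp
  also have "\<dots> = (x + 1)^n" by (simp add: binomial_ring atLeast0AtMost)
  finally show ?thesis by (simp add: add.commute)
qed

lemma int_binom:
  assumes "n \<ge> 1"
  shows "((\<lambda>u. (2*c) * (1 - 2*c*u)^(n-1) * lam p u) has_integral
     (\<Sum>k=1..n. real ((n-1) choose (k-1)) * (-2*c)^(k-1) * (2*c) / real k ^ (p+1))) {0..1}"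
proof -
  have "((\<lambda>u. \<Sum>k=1..n. (real ((n-1) choose (k-1)) * (-2*c)^(k-1) * (2*c)) * (u^(k-1) * lam p u)) has_integral
     (\<Sum>k=1..n. (real ((n-1) choose (k-1)) * (-2*c)^(k-1) * (2*c)) * (1 / real k ^ (p+1)))) {0..1}"
  proof (rule has_integral_sum)
    fix k assume "k \<in> {1..n}"
    then have "((\<lambda>u. u^(k-1) * lam p u) has_integral 1 / real k ^ (p+1)) {0..1}"
      by (intro int_mono_lam) auto
    from has_integral_mult_right[OF this]
    show "((\<lambda>u. (real ((n-1) choose (k-1)) * (-2*c)^(k-1) * (2*c)) * (u^(k-1) * lam p u)) has_integral
      (real ((n-1) choose (k-1)) * (-2*c)^(k-1) * (2*c)) * (1 / real k ^ (p+1))) {0..1}" .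
  qed simp
  moreover have "\<And>u. (\<Sum>k=1..n. (real ((n-1) choose (k-1)) * (-2*c)^(k-1) * (2*c)) * (u^(k-1) * lam p u))
     = (2*c) * (1 - 2*c*u)^(n-1) * lam p u"
  proof -
    fix u
    obtain n' where n: "n = Suc n'" using assms by (cases n) auto
    have "(\<Sum>k=1..n. (real ((n-1) choose (k-1)) * (-2*c)^(k-1) * (2*c)) * (u^(k-1) * lam p u))
      = (\<Sum>k=1..Suc n'. real (n' choose (k-1)) * ((-2*c)^(k-1) * u^(k-1))) * ((2*c) * lam p u)"
      unfolding n sum_distrib_right by (intro sum.cong) (auto simp: algebra_simps)
    also have "\<dots> = (\<Sum>k=1..Suc n'. real (n' choose (k-1)) * (-2*c*u)^(k-1)) * ((2*c) * lam p u)"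
      by (simp only: power_mult_distrib)
    also have "\<dots> = (1 + (-2*c*u))^n' * ((2*c) * lam p u)" by (subst binom_poly) simp
    finally show "?thesis u" unfolding n by simp
  qed
  ultimately show ?thesis by (simp add: field_simps)
qed

lemma alt_geom: "(1 + y) * (\<Sum>n=1..N. (-1)^n * y^(n-1)) = - (1 - (-y)^N :: real)"
proof (induction N)
  case 0 then show ?case by simp
next
  case (Suc N)
  have "(1 + y) * (\<Sum>n=1..Suc N. (-1)^n * y^(n-1)) = (1 + y) * (\<Sum>n=1..N. (-1)^n * y^(n-1)) + (1 + y) * ((-1)^(Suc N) * y^N)"
    by (simp only: sum.cl_ivl_Suc distrib_left) (simp add: algebra_simps)
  also have "\<dots> = - (1 - (-y)^(Suc N))" using Suc by (simp add: field_simps power_minus[of y])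
  finally show ?case .
qed


lemma alt_geom': "1 + y \<noteq> 0 \<Longrightarrow> (\<Sum>n=1..N. (-1)^n * y^(n-1)) = - (1 - (-y)^N) / (1 + y :: real)"
  using alt_geom[of y N] by (simp add: field_simps)

lemma lam_0: "p \<ge> 1 \<Longrightarrow> lam p 0 = 0"
  unfolding lam_def by simp

lemma F_form: "(\<Sum>n=1..N. (-1)^n * (a * y^(n-1))) = a * (\<Sum>n=1..N. (-1)^n * y^(n-1) :: real)"
  by (simp add: sum_distrib_left mult_ac)

lemma E_lim:
  assumes c: "0 < c" "c \<le> 1" and p: "p \<ge> 1"
  shows "(\<lambda>N. \<Sum>n=1..N. (-1)^n * (\<Sum>k=1..n. real ((n-1) choose (k-1)) * (-2*c)^(k-1) * (2*c) / real k^(p+1)))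
           \<longlonglongrightarrow> - polylog (p+1) c"
proof -
  define F where "F N u = (\<Sum>n=1..N. (-1)^n * ((2*c) * (1-2*c*u)^(n-1))) * lam p u" for N u
  define E where "E N = (\<Sum>n=1..N. (-1)^n * (\<Sum>k=1..n. real ((n-1) choose (k-1)) * (-2*c)^(k-1) * (2*c) / real k^(p+1)))" for N
  define h where "h u = 2 * (c / (1 - c * u) * lam p u)" for u
  define g where "g u = - (c / (1 - c * u) * lam p u)" for u
  have Fi: "(F N has_integral E N) {0..1}" for N
  proof -
    have "((\<lambda>u. \<Sum>n=1..N. (-1)^n * ((2*c) * (1 - 2*c*u)^(n-1) * lam p u)) has_integral E N) {0..1}"
      unfolding E_def
    proof (rule has_integral_sum)
      fix n assume "n \<in> {1..N}"
      then have "n \<ge> 1" by simp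
      from has_integral_mult_right[OF int_binom[OF this, of c p], of "(-1)^n"]
      show "((\<lambda>u. (-1)^n * ((2*c) * (1 - 2*c*u)^(n-1) * lam p u)) has_integral
         (-1)^n * (\<Sum>k=1..n. real ((n-1) choose (k-1)) * (-2*c)^(k-1) * (2*c) / real k^(p+1))) {0..1}" .
    qed simp
    moreover have "\<And>u. (\<Sum>n=1..N. (-1)^n * ((2*c) * (1 - 2*c*u)^(n-1) * lam p u)) = F N u"
      unfolding F_def sum_distrib_right by (simp add: mult.assoc)
    ultimately show ?thesis by simp
  qed
  have hi: "h integrable_on {0..1}"
    unfolding h_def using has_integral_mult_right[OF int_series[OF c p], of 2] by blast
  have gi: "(g has_integral - polylog (p+1) c) {0..1}"
    unfolding g_def using has_integral_neg[OF int_series[OF c p]] by simp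
  have dc: "(\<lambda>N. integral {0..1} (F N)) \<longlonglongrightarrow> integral {0..1} g"
  proof (rule dominated_convergence(2)[OF _ hi])
    show "\<And>N. F N integrable_on {0..1}" using Fi by blast
  next
    fix N and x :: real assume x: "x \<in> {0..1}"
    show "norm (F N x) \<le> h x"
    proof (cases "c * x < 1")
      case True
      define y where "y = 1 - 2*c*x"
      have y1: "1 + y = 2 * (1 - c * x)" unfolding y_def by simp
      have ypos: "1 + y > 0" using y1 True by simp
      have yab: "\<bar>y\<bar> \<le> 1" unfolding y_def using x c by (auto simp: abs_le_iff mult_le_one)
      have "\<bar>(-y)^N\<bar> = \<bar>y\<bar>^N" by (simp add: power_abs)
      also have "\<dots> \<le> 1" by (rule power_le_one) (use yab in auto)
      finally have "\<bar>(-y)^N\<bar> \<le> 1" .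
      then have b2: "\<bar>1 - (-y)^N\<bar> \<le> 2" by linarith
      have "F N x = (2*c) * (- (1 - (-y)^N) / (1 + y)) * lam p x"
        unfolding F_def y_def[symmetric] F_form using alt_geom'[of y N] ypos by simp
      then have "norm (F N x) = (2*c) * (\<bar>1 - (-y)^N\<bar> / (1 + y)) * lam p x"
        using c ypos lam_nonneg[of x p] x by (simp add: abs_mult abs_divide abs_minus_commute)
      also have "\<dots> \<le> (2*c) * (2 / (1 + y)) * lam p x"
        using c ypos lam_nonneg[of x p] x b2
        by (intro mult_right_mono mult_left_mono divide_right_mono) auto
      also have "\<dots> = h x" unfolding h_def y1 using True by (simp add: field_simps)
      finally show ?thesis .
    next
      case False
      have "c * x \<le> x" using x c mult_right_mono[of c 1 x] by simp
      then have "x = 1" using False x by simp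
      then show ?thesis unfolding F_def h_def using lam_1[OF p] by simp
    qed
  next
    fix x :: real assume x: "x \<in> {0..1}"
    show "(\<lambda>N. F N x) \<longlonglongrightarrow> g x"
    proof (cases "c * x < 1 \<and> x > 0")
      case True
      define y where "y = 1 - 2*c*x"
      have y1: "1 + y = 2 * (1 - c * x)" unfolding y_def by simp
      have ypos: "1 + y > 0" using y1 True by simp
      have yab: "\<bar>y\<bar> < 1" unfolding y_def using x c True by (auto simp: abs_less_iff)
      have "(\<lambda>N. (-y)^N) \<longlonglongrightarrow> 0" by (rule LIMSEQ_power_zero) (use yab in simp)
      then have "(\<lambda>N. (2*c) * (- (1 - (-y)^N) / (1 + y)) * lam p x) \<longlonglongrightarrow> (2*c) * (- (1 - 0) / (1 + y)) * lam p x"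
        by (intro tendsto_intros) (use ypos yab in auto)
      moreover have "\<And>N. F N x = (2*c) * (- (1 - (-y)^N) / (1 + y)) * lam p x"
        unfolding F_def y_def[symmetric] F_form using alt_geom' ypos by simp
      moreover have "(2*c) * (- (1 - 0) / (1 + y)) * lam p x = g x"
        unfolding g_def y1 using True by (simp add: field_simps)
      ultimately show ?thesis by simp
    next
      case False
      then have "x = 0 \<or> x = 1"
      proof (cases "x > 0")
        case True
        have "c * x \<le> x" using x c mult_right_mono[of c 1 x] by simp
        then have "x \<ge> 1" using False True by linarith
        then show ?thesis using x by auto
      qed (use x in auto)
      then have "lam p x = 0" using lam_0[OF p] lam_1[OF p] by auto
      then show ?thesis unfolding F_def g_def by simp
    qed
  qed
  have "integral {0..1} g = - polylog (p+1) c" using gi by (rule integral_unique)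
  moreover have "\<And>N. integral {0..1} (F N) = E N" using Fi by (rule integral_unique)
  ultimately show ?thesis using dc unfolding E_def by simp
qed



lemma binom_div: "k \<ge> 1 \<Longrightarrow> real (Suc n choose k) / real (Suc n) = real (n choose (k-1)) / real k"
proof -
  assume "k \<ge> 1"
  then obtain k' where k: "k = Suc k'" by (cases k) auto
  have "real (Suc k') * real (Suc n choose Suc k') = real (Suc n) * real (n choose k')"
    using Suc_times_binomial[of k' n] by (metis of_nat_mult)
  then show ?thesis unfolding k by (simp add: field_simps)
qed

lemma div_n:
  "(\<Sum>k=1..Suc n. real (Suc n choose k) * d k / real k ^ q) / real (Suc n)
     = (\<Sum>k=1..Suc n. real (n choose (k-1)) * d k / real k ^ (Suc q))"
  unfolding sum_divide_distrib
proof (rule sum.cong)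
  fix k assume "k \<in> {1..Suc n}"
  then have k: "k \<ge> 1" by simp
  have "real (Suc n choose k) * d k / real k ^ q / real (Suc n)
        = (real (Suc n choose k) / real (Suc n)) * d k / real k ^ q" by simp
  also have "\<dots> = real (n choose (k-1)) / real k * d k / real k ^ q" using binom_div[OF k] by simp
  also have "\<dots> = real (n choose (k-1)) * d k / real k ^ (Suc q)" by (simp add: field_simps)
  finally show "real (Suc n choose k) * d k / real k ^ q / real (Suc n) = real (n choose (k-1)) * d k / real k ^ (Suc q)" .
qed simp

lemma binom_step:
  "(\<Sum>k=1..Suc n. real (Suc n choose k) * d k / real k ^ (Suc q))
   = (\<Sum>k=1..n. real (n choose k) * d k / real k ^ (Suc q))
     + (\<Sum>k=1..Suc n. real (Suc n choose k) * d k / real k ^ q) / real (Suc n)"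
proof -
  have e1: "(\<Sum>k=1..n. real (n choose k) * d k / real k ^ (Suc q)) = (\<Sum>k=1..Suc n. real (n choose k) * d k / real k ^ (Suc q))"
    by simp
  have e2: "(\<Sum>k=1..Suc n. real (Suc n choose k) * d k / real k ^ (Suc q))
     = (\<Sum>k=1..Suc n. real (n choose k) * d k / real k ^ (Suc q)) + (\<Sum>k=1..Suc n. real (n choose (k-1)) * d k / real k ^ (Suc q))"
    unfolding sum.distrib[symmetric]
  proof (rule sum.cong)
    fix k assume "k \<in> {1..Suc n}"
    then obtain k' where k: "k = Suc k'" by (cases k) auto
    show "real (Suc n choose k) * d k / real k ^ Suc q = real (n choose k) * d k / real k ^ Suc q + real (n choose (k - 1)) * d k / real k ^ Suc q"
      unfolding k by (simp add: add_divide_distrib distrib_left distrib_right)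
  qed simp
  show ?thesis unfolding e1 e2 div_n ..
qed

lemma zt_cons: "zstar_trunc N (s # ss) = (\<Sum>n=1..N. (sgn (real_of_int s)) ^ n / (real n) ^ (nat \<bar>s\<bar>) * zstar_trunc n ss)"
  by simp

lemma T_formula:
  "m \<ge> 1 \<or> n \<ge> 1 \<Longrightarrow> zstar_trunc n (replicate m 1) = (\<Sum>k=1..n. real (n choose k) * (-1)^(k+1) / real k ^ m)"
proof (induction m arbitrary: n)
  case 0
  then have n: "n \<ge> 1" by simp
  have "(\<Sum>k=0..n. (-1)^k * real (n choose k)) = 0"
    using choose_alternating_sum[of n] n by (simp add: atLeast0AtMost)
  moreover have "(\<Sum>k=0..n. (-1)^k * real (n choose k)) = 1 + (\<Sum>k=1..n. (-1)^k * real (n choose k))"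
    by (simp add: sum.atLeast_Suc_atMost)
  ultimately have "(\<Sum>k=1..n. (-1)^k * real (n choose k)) = -1" by simp
  then have "(\<Sum>k=1..n. real (n choose k) * (-1)^(k+1)) = 1"
    by (simp add: sum_negf mult.commute)
  then show ?case by simp
next
  case (Suc m)
  note outer = Suc.IH
  show ?case
  proof (induction n)
    case 0 then show ?case by simp
  next
    case (Suc n)
    have "zstar_trunc (Suc n) (replicate (Suc m) 1) = zstar_trunc n (replicate (Suc m) 1)
       + zstar_trunc (Suc n) (replicate m 1) / real (Suc n)" by simp
    also have "\<dots> = (\<Sum>k=1..n. real (n choose k) * (-1)^(k+1) / real k ^ Suc m)
       + (\<Sum>k=1..Suc n. real (Suc n choose k) * (-1)^(k+1) / real k ^ m) / real (Suc n)"
      using Suc.IH outer[of "Suc n"] by simp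
    also have "\<dots> = (\<Sum>k=1..Suc n. real (Suc n choose k) * (-1)^(k+1) / real k ^ Suc m)"
      by (rule binom_step[symmetric])
    finally show ?case .
  qed
qed


lemma alt2_sum: "n \<ge> 1 \<Longrightarrow> (\<Sum>k=1..n. real (n choose k) * ((-1)^k * (2^k - 1))) = (-1)^n"
proof -
  assume n: "n \<ge> 1"
  have a: "(\<Sum>k\<le>n. real (n choose k) * (-2)^k) = (-1)^n"
    using binomial_ring[of "-2::real" 1 n] by simp
  have b: "(\<Sum>k\<le>n. real (n choose k) * (-1)^k) = 0"
    using binomial_ring[of "-1::real" 1 n] n by (simp add: power_0_left)
  have "(\<Sum>k=1..n. real (n choose k) * ((-1)^k * (2^k - 1))) = (\<Sum>k\<le>n. real (n choose k) * ((-1)^k * (2^k - 1)))"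
    by (simp add: atMost_atLeast0 sum.atLeast_Suc_atMost)
  also have "\<dots> = (\<Sum>k\<le>n. real (n choose k) * (-2)^k) - (\<Sum>k\<le>n. real (n choose k) * (-1)^k)"
    unfolding sum_subtractf[symmetric]
    by (rule sum.cong) (auto simp: algebra_simps power_mult_distrib[symmetric])
  finally show ?thesis using a b by simp
qed

lemma A_formula:
  "zstar_trunc n (replicate m 1 @ [-1]) = (\<Sum>k=1..n. real (n choose k) * ((-1)^k * (2^k - 1)) / real k ^ (m+1))"
proof (induction m arbitrary: n)
  case 0
  show ?case
  proof (induction n)
    case 0 then show ?case by simp
  next
    case (Suc n)
    have "zstar_trunc (Suc n) (replicate 0 1 @ [-1]) = zstar_trunc n (replicate 0 1 @ [-1]) + (-1)^(Suc n) / real (Suc n)"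
      by simp
    also have "\<dots> = (\<Sum>k=1..n. real (n choose k) * ((-1)^k * (2^k - 1)) / real k ^ (Suc 0))
       + (\<Sum>k=1..Suc n. real (Suc n choose k) * ((-1)^k * (2^k - 1)) / real k ^ 0) / real (Suc n)"
      using Suc.IH alt2_sum[of "Suc n"] by simp
    also have "\<dots> = (\<Sum>k=1..Suc n. real (Suc n choose k) * ((-1)^k * (2^k - 1)) / real k ^ (Suc 0))"
      by (rule binom_step[symmetric])
    finally show ?case by simp
  qed
next
  case (Suc m)
  note outer = Suc.IH
  show ?case
  proof (induction n)
    case 0 then show ?case by simp
  next
    case (Suc n)
    have "zstar_trunc (Suc n) (replicate (Suc m) 1 @ [-1]) = zstar_trunc n (replicate (Suc m) 1 @ [-1])
       + zstar_trunc (Suc n) (replicate m 1 @ [-1]) / real (Suc n)" by simp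
    also have "\<dots> = (\<Sum>k=1..n. real (n choose k) * ((-1)^k * (2^k - 1)) / real k ^ Suc (m+1))
       + (\<Sum>k=1..Suc n. real (Suc n choose k) * ((-1)^k * (2^k - 1)) / real k ^ (m+1)) / real (Suc n)"
      using Suc.IH outer[of "Suc n"] by simp
    also have "\<dots> = (\<Sum>k=1..Suc n. real (Suc n choose k) * ((-1)^k * (2^k - 1)) / real k ^ Suc (m+1))"
      by (rule binom_step[symmetric])
    finally show ?case by simp
  qed
qed



lemma term_B:
  assumes n: "n \<ge> 1"
  shows "(-1)^n / real n * zstar_trunc n (replicate i 1)
     = (-1)^n * (\<Sum>k=1..n. real ((n-1) choose (k-1)) * (-2*(1/2))^(k-1) * (2*(1/2)) / real k^(i+1))"
proof -
  obtain n' where n': "n = Suc n'" using n by (cases n) auto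
  have "zstar_trunc n (replicate i 1) / real n = (\<Sum>k=1..n. real (n choose k) * (-1)^(k+1) / real k ^ i) / real n"
    using T_formula[of i n] n by simp
  also have "\<dots> = (\<Sum>k=1..n. real ((n-1) choose (k-1)) * (-1)^(k+1) / real k ^ (Suc i))"
    unfolding n' using div_n[of n' "\<lambda>k. (-1)^(k+1)" i] by simp
  also have "\<dots> = (\<Sum>k=1..n. real ((n-1) choose (k-1)) * (-2*(1/2))^(k-1) * (2*(1/2)) / real k^(i+1))"
  proof (rule sum.cong)
    fix k assume "k \<in> {1..n}"
    then obtain k' where "k = Suc k'" by (cases k) auto
    then show "real ((n-1) choose (k-1)) * (-1)^(k+1) / real k ^ (Suc i) = real ((n-1) choose (k-1)) * (-2*(1/2))^(k-1) * (2*(1/2)) / real k^(i+1)"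
      by simp
  qed simp
  finally have "zstar_trunc n (replicate i 1) / real n = (\<Sum>k=1..n. real ((n-1) choose (k-1)) * (-2*(1/2))^(k-1) * (2*(1/2)) / real k^(i+1))" .
  then show ?thesis by (metis times_divide_eq_left times_divide_eq_right)
qed

lemma lim_B:
  assumes i: "i \<ge> 1"
  shows "(\<lambda>N. zstar_trunc N ((-1) # replicate i 1)) \<longlonglongrightarrow> - polylog (i+1) (1/2)"
proof -
  have "(\<lambda>N. \<Sum>n=1..N. (-1)^n * (\<Sum>k=1..n. real ((n-1) choose (k-1)) * (-2*(1/2))^(k-1) * (2*(1/2)) / real k^(i+1)))
           \<longlonglongrightarrow> - polylog (i+1) (1/2)"
    by (rule E_lim) (use i in auto)
  moreover have "\<And>N. zstar_trunc N ((-1) # replicate i 1) = (\<Sum>n=1..N. (-1)^n * (\<Sum>k=1..n. real ((n-1) choose (k-1)) * (-2*(1/2))^(k-1) * (2*(1/2)) / real k^(i+1)))"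
    unfolding zt_cons
    by (intro sum.cong) (use term_B in auto)
  ultimately show ?thesis by simp
qed


lemma term_A:
  assumes n: "n \<ge> 1"
  shows "(-1)^n / real n * zstar_trunc n (replicate m 1 @ [-1])
     = (-1)^n * (\<Sum>k=1..n. real ((n-1) choose (k-1)) * (-2*(1/2))^(k-1) * (2*(1/2)) / real k^(m+1+1))
       - (-1)^n * (\<Sum>k=1..n. real ((n-1) choose (k-1)) * (-2*1)^(k-1) * (2*1) / real k^(m+1+1))"
proof -
  obtain n' where n': "n = Suc n'" using n by (cases n) auto
  have "zstar_trunc n (replicate m 1 @ [-1]) / real n = (\<Sum>k=1..n. real (n choose k) * ((-1)^k * (2^k - 1)) / real k ^ (m+1)) / real n"
    using A_formula[of n m] by simp
  also have "\<dots> = (\<Sum>k=1..n. real ((n-1) choose (k-1)) * ((-1)^k * (2^k - 1)) / real k ^ (Suc (m+1)))"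
    unfolding n' using div_n[of n' "\<lambda>k. (-1)^k * (2^k - 1)" "m+1"] by simp
  also have "\<dots> = (\<Sum>k=1..n. real ((n-1) choose (k-1)) * (-2*(1/2))^(k-1) * (2*(1/2)) / real k^(m+1+1))
       - (\<Sum>k=1..n. real ((n-1) choose (k-1)) * (-2*1)^(k-1) * (2*1) / real k^(m+1+1))"
    unfolding sum_subtractf[symmetric]
  proof (rule sum.cong)
    fix k assume "k \<in> {1..n}"
    then obtain k' where k: "k = Suc k'" by (cases k) auto
    have e: "(-1::real)^k * (2^k - 1) = (-1)^(k-1) - (-2)^(k-1) * 2"
      unfolding k by (simp add: power_mult_distrib[symmetric] algebra_simps)
    show "real ((n-1) choose (k-1)) * ((-1)^k * (2^k - 1)) / real k ^ (Suc (m+1)) =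
      real ((n-1) choose (k-1)) * (-2*(1/2))^(k-1) * (2*(1/2)) / real k^(m+1+1)
       - real ((n-1) choose (k-1)) * (-2*1)^(k-1) * (2*1) / real k^(m+1+1)"
      unfolding e by (simp add: diff_divide_distrib algebra_simps)
  qed simp
  finally have e: "zstar_trunc n (replicate m 1 @ [-1]) / real n = (\<Sum>k=1..n. real ((n-1) choose (k-1)) * (-2*(1/2))^(k-1) * (2*(1/2)) / real k^(m+1+1))
       - (\<Sum>k=1..n. real ((n-1) choose (k-1)) * (-2*1)^(k-1) * (2*1) / real k^(m+1+1))" .
  have "(-1)^n / real n * zstar_trunc n (replicate m 1 @ [-1]) = (-1)^n * (zstar_trunc n (replicate m 1 @ [-1]) / real n)"
    by simp
  then show ?thesis unfolding e right_diff_distrib .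
qed

lemma lim_A:
  "(\<lambda>N. zstar_trunc N ((-1) # (replicate m 1 @ [-1]))) \<longlonglongrightarrow> rzeta (m+2) - polylog (m+2) (1/2)"
proof -
  have h: "(\<lambda>N. \<Sum>n=1..N. (-1)^n * (\<Sum>k=1..n. real ((n-1) choose (k-1)) * (-2*(1/2))^(k-1) * (2*(1/2)) / real k^(m+1+1)))
           \<longlonglongrightarrow> - polylog (m+1+1) (1/2)"
    by (rule E_lim) auto
  have o: "(\<lambda>N. \<Sum>n=1..N. (-1)^n * (\<Sum>k=1..n. real ((n-1) choose (k-1)) * (-2*1)^(k-1) * (2*1) / real k^(m+1+1)))
           \<longlonglongrightarrow> - polylog (m+1+1) 1"
    by (rule E_lim) auto
  have "polylog (m+2) 1 = rzeta (m+2)" unfolding polylog_def rzeta_def by simp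
  then have lim: "(\<lambda>N. (\<Sum>n=1..N. (-1)^n * (\<Sum>k=1..n. real ((n-1) choose (k-1)) * (-2*(1/2))^(k-1) * (2*(1/2)) / real k^(m+1+1)))
      - (\<Sum>n=1..N. (-1)^n * (\<Sum>k=1..n. real ((n-1) choose (k-1)) * (-2*1)^(k-1) * (2*1) / real k^(m+1+1))))
      \<longlonglongrightarrow> rzeta (m+2) - polylog (m+2) (1/2)"
    using tendsto_diff[OF h o] by (simp add: numeral_2_eq_2)
  have "\<And>N. zstar_trunc N ((-1) # (replicate m 1 @ [-1])) =
      (\<Sum>n=1..N. (-1)^n * (\<Sum>k=1..n. real ((n-1) choose (k-1)) * (-2*(1/2))^(k-1) * (2*(1/2)) / real k^(m+1+1)))
      - (\<Sum>n=1..N. (-1)^n * (\<Sum>k=1..n. real ((n-1) choose (k-1)) * (-2*1)^(k-1) * (2*1) / real k^(m+1+1)))"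
    unfolding zt_cons sum_subtractf[symmetric]
    by (intro sum.cong) (use term_A in auto)
  then show ?thesis using lim by simp
qed


lemma sum_1N: "(\<Sum>n=1..N. f n) = (\<Sum>k<N. f (Suc k) :: real)"
  by (induction N) (auto simp: sum.atLeast_Suc_atMost)

lemma sq_identity:
  fixes a :: "nat \<Rightarrow> real" and N :: nat
  shows "2 * (\<Sum>n=1..N. a n * (\<Sum>k=1..n. a k)) = (\<Sum>n=1..N. a n)^2 + (\<Sum>n=1..N. (a n)^2 :: real)"
  by (induction N) (auto simp: power2_eq_square algebra_simps)

lemma lim_C:
  "(\<lambda>N. zstar_trunc N [-1, -1]) \<longlonglongrightarrow> (rzeta 2 + (ln 2)^2) / 2"
proof -
  define a where "a n = (-1)^n / real n" for n
  have z: "zstar_trunc N [-1, -1] = (\<Sum>n=1..N. a n * (\<Sum>k=1..n. a k))" for N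
    unfolding a_def by simp
  have s1: "(\<lambda>N. \<Sum>n=1..N. a n) \<longlonglongrightarrow> - ln 2"
  proof -
    have "(\<lambda>N. \<Sum>k<N. (-1)^k / real (Suc k)) \<longlonglongrightarrow> ln 2"
      using alternating_harmonic_series_sums unfolding sums_def .
    then have "(\<lambda>N. - (\<Sum>k<N. (-1)^k / real (Suc k))) \<longlonglongrightarrow> - ln 2"
      by (rule tendsto_minus)
    moreover have "\<And>N. (\<Sum>n=1..N. a n) = - (\<Sum>k<N. (-1)^k / real (Suc k))"
      unfolding sum_1N a_def by (simp add: sum_negf[symmetric])
    ultimately show ?thesis by simp
  qed
  have s2: "(\<lambda>N. \<Sum>n=1..N. (a n)^2) \<longlonglongrightarrow> rzeta 2"
  proof -
    have sm: "summable (\<lambda>n. 1 / real (Suc n) ^ 2)"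
      using inverse_power_summable[of 2, where 'a=real] by (subst summable_Suc_iff) (simp add: inverse_eq_divide)
    have "(\<lambda>N. \<Sum>k<N. 1 / real (Suc k) ^ 2) \<longlonglongrightarrow> rzeta 2"
      unfolding rzeta_def using summable_LIMSEQ[OF sm] .
    moreover have "\<And>N. (\<Sum>n=1..N. (a n)^2) = (\<Sum>k<N. 1 / real (Suc k) ^ 2)"
    proof -
      have m1: "((-1::real)^k)^2 = 1" for k :: nat by (simp add: power_even_eq[symmetric] power_mult[symmetric] mult.commute)
      show "\<And>N. (\<Sum>n=1..N. (a n)^2) = (\<Sum>k<N. 1 / real (Suc k) ^ 2)"
        unfolding sum_1N a_def by (simp add: power_divide m1)
    qed
    ultimately show ?thesis by simp
  qed
  have l: "(\<lambda>N. ((\<Sum>n=1..N. a n)^2 + (\<Sum>n=1..N. (a n)^2)) / 2) \<longlonglongrightarrow> ((- ln 2)^2 + rzeta 2) / 2"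
    by (intro tendsto_intros s1 s2) simp
  have "(\<lambda>N. zstar_trunc N [-1, -1]) = (\<lambda>N. ((\<Sum>n=1..N. a n)^2 + (\<Sum>n=1..N. (a n)^2)) / 2)"
  proof
    fix N
    show "zstar_trunc N [-1, -1] = ((\<Sum>n=1..N. a n)^2 + (\<Sum>n=1..N. (a n)^2)) / 2"
      unfolding z sq_identity[of a N, symmetric] by simp
  qed
  then show ?thesis using l by (simp add: add.commute)
qed



lemma swap_tri:
  fixes f :: "nat \<Rightarrow> nat \<Rightarrow> real"
  shows "(\<Sum>k=1..m. \<Sum>l=1..k. f k l) = (\<Sum>l=1..m. \<Sum>k=l..m. f k l)"
proof (induction m)
  case 0 then show ?case by simp
next
  case (Suc m)
  have "(\<Sum>l=1..Suc m. \<Sum>k=l..Suc m. f k l) = (\<Sum>l=1..Suc m. (\<Sum>k=l..m. f k l) + f (Suc m) l)"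
    by (intro sum.cong) (auto simp: sum.cl_ivl_Suc)
  also have "\<dots> = (\<Sum>l=1..Suc m. \<Sum>k=l..m. f k l) + (\<Sum>l=1..Suc m. f (Suc m) l)"
    by (simp add: sum.distrib)
  also have "(\<Sum>l=1..Suc m. \<Sum>k=l..m. f k l) = (\<Sum>l=1..m. \<Sum>k=l..m. f k l)"
    by (simp add: sum.cl_ivl_Suc)
  finally show ?case using Suc by simp
qed

lemma inner_alt:
  assumes "1 \<le> l" "l \<le> m"
  shows "(\<Sum>k=l..m. real (m choose k) * real (k choose l) * (-1)^(k+1)) = (if l = m then (-1)^(m+1) else 0)"
proof -
  have "(\<Sum>k=l..m. real (m choose k) * real (k choose l) * (-1)^(k+1))
      = (\<Sum>k=l..m. real (m choose l) * (real ((m-l) choose (k-l)) * (-1)^(k+1)))"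
  proof (rule sum.cong)
    fix k assume k: "k \<in> {l..m}"
    have "(m choose k) * (k choose l) = (m choose l) * ((m - l) choose (k - l))"
      using choose_mult[of l k m] k by simp
    then have "real (m choose k) * real (k choose l) = real (m choose l) * real ((m - l) choose (k - l))"
      by (metis of_nat_mult)
    then show "real (m choose k) * real (k choose l) * (-1)^(k+1) = real (m choose l) * (real ((m-l) choose (k-l)) * (-1)^(k+1))"
      by simp
  qed simp
  also have "\<dots> = real (m choose l) * (\<Sum>k=l..m. real ((m-l) choose (k-l)) * (-1)^(k+1))"
    by (simp add: sum_distrib_left)
  also have "(\<Sum>k=l..m. real ((m-l) choose (k-l)) * (-1)^(k+1)) = (\<Sum>j=0..m-l. real ((m-l) choose j) * (-1)^(j+l+1))"
  proof -
    have "{l..m} = {0+l..(m-l)+l}" using assms by simp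
    then have "(\<Sum>k=l..m. real ((m-l) choose (k-l)) * (-1)^(k+1)) = (\<Sum>j=0..m-l. real ((m-l) choose (j+l-l)) * (-1)^(j+l+1))"
      by (simp only: sum.shift_bounds_cl_nat_ivl)
    then show ?thesis by simp
  qed
  also have "\<dots> = (-1)^(l+1) * (\<Sum>j\<le>m-l. real ((m-l) choose j) * (-1)^j)"
    by (simp add: sum_distrib_left atMost_atLeast0 power_add mult_ac)
  also have "(\<Sum>j\<le>m-l. real ((m-l) choose j) * (-1)^j) = (0::real)^(m-l)"
    using binomial_ring[of "-1::real" 1 "m-l"] by simp
  finally show ?thesis using assms by (auto simp: power_0_left)
qed

lemma alg:
  fixes z L :: "nat \<Rightarrow> real" and a :: real and m :: nat
  assumes m: "m \<ge> 1"
  shows "z (m+2) - L (m+2) =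
   (-1)^m / fact m * z 2 * a^m
   - (-1)^m / fact (m+1) * (\<Sum>i=1..m. (-1)^(i+1) * fact i * real ((m+1) choose i) * a^(m+1-i) * ((z (i-1+2) - L (i-1+2)) - (- L (i+1))))
   + (-1)^m / fact m * (\<Sum>k=1..m. real (m choose k) * (-1)^(k+1) * ((\<Sum>l=1..k. fact l * real (k choose l) * a^(m-l) * L (l+2)) - fact k * a^(m-k) * z (k+2)))"
proof -
  define W where "W i = (-1)^(i+1) * a^(m+1-i) * z (i+1) / fact (m+1-i)" for i
  have M: "(-1)^m / fact (m+1) * (\<Sum>i=1..m. (-1)^(i+1) * fact i * real ((m+1) choose i) * a^(m+1-i) * ((z (i-1+2) - L (i-1+2)) - (- L (i+1))))
     = (-1)^m * (\<Sum>i=1..m. W i)"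
    unfolding sum_distrib_left
  proof (rule sum.cong)
    fix i assume i: "i \<in> {1..m}"
    have f: "fact i * fact (m+1-i) * real ((m+1) choose i) = (fact (m+1) :: real)"
      using binomial_fact_lemma[of i "m+1"] i by (metis le_SucI atLeastAtMost_iff Suc_eq_plus1 of_nat_fact of_nat_mult)
    have ii: "i - 1 + 2 = i + 1" using i by auto
    define H where "H = (fact i :: real)"
    define G where "G = (fact (m+1-i) :: real)"
    define C where "C = real ((m+1) choose i)"
    have f': "fact (m+1) = H * G * C" unfolding H_def G_def C_def using f by simp
    have nz: "H \<noteq> 0" "G \<noteq> 0" "C \<noteq> 0" unfolding H_def G_def C_def using i by auto
    show "(-1)^m / fact (m+1) * ((-1)^(i+1) * fact i * real ((m+1) choose i) * a^(m+1-i) * ((z (i-1+2) - L (i-1+2)) - (- L (i+1))))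
      = (-1)^m * W i"
      unfolding W_def ii f' H_def[symmetric] G_def[symmetric] C_def[symmetric] using nz by (simp add: field_simps)
  qed simp
  have Q: "(-1)^m / fact m * (\<Sum>k=1..m. real (m choose k) * (-1)^(k+1) * (fact k * a^(m-k) * z (k+2)))
     = - ((-1)^m * (\<Sum>k=1..m. W (Suc k)))"
    unfolding sum_distrib_left sum_negf[symmetric]
  proof (rule sum.cong)
    fix k assume k: "k \<in> {1..m}"
    have f: "fact k * fact (m-k) * real (m choose k) = (fact m :: real)"
      using binomial_fact_lemma[of k m] k by (metis atLeastAtMost_iff of_nat_fact of_nat_mult)
    then have "fact k * real (m choose k) = (fact m :: real) / fact (m-k)"
      by (simp add: field_simps)
    moreover have "m + 1 - Suc k = m - k" "Suc k + 1 = k + 2" by auto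
    ultimately show "(-1)^m / fact m * (real (m choose k) * (-1)^(k+1) * (fact k * a^(m-k) * z (k+2))) = - ((-1)^m * W (Suc k))"
      unfolding W_def by (simp add: field_simps)
  qed simp
  have P: "(-1)^m / fact m * (\<Sum>k=1..m. real (m choose k) * (-1)^(k+1) * (\<Sum>l=1..k. fact l * real (k choose l) * a^(m-l) * L (l+2)))
     = - L (m+2)"
  proof -
    have "(\<Sum>k=1..m. real (m choose k) * (-1)^(k+1) * (\<Sum>l=1..k. fact l * real (k choose l) * a^(m-l) * L (l+2)))
       = (\<Sum>k=1..m. \<Sum>l=1..k. (fact l * a^(m-l) * L (l+2)) * (real (m choose k) * real (k choose l) * (-1)^(k+1)))"
      by (simp add: sum_distrib_left mult_ac)
    also have "\<dots> = (\<Sum>l=1..m. \<Sum>k=l..m. (fact l * a^(m-l) * L (l+2)) * (real (m choose k) * real (k choose l) * (-1)^(k+1)))"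
      by (rule swap_tri)
    also have "\<dots> = (\<Sum>l=1..m. (fact l * a^(m-l) * L (l+2)) * (if l = m then (-1)^(m+1) else 0))"
    proof (rule sum.cong[OF refl])
      fix l assume l: "l \<in> {1..m}"
      have "(\<Sum>k=l..m. (fact l * a^(m-l) * L (l+2)) * (real (m choose k) * real (k choose l) * (-1)^(k+1)))
         = (fact l * a^(m-l) * L (l+2)) * (\<Sum>k=l..m. real (m choose k) * real (k choose l) * (-1)^(k+1))"
        by (rule sum_distrib_left[symmetric])
      also have "\<dots> = (fact l * a^(m-l) * L (l+2)) * (if l = m then (-1)^(m+1) else 0)"
        using l inner_alt[of l m] by simp
      finally show "(\<Sum>k=l..m. (fact l * a^(m-l) * L (l+2)) * (real (m choose k) * real (k choose l) * (-1)^(k+1)))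
         = (fact l * a^(m-l) * L (l+2)) * (if l = m then (-1)^(m+1) else 0)" .
    qed
    also have "\<dots> = fact m * L (m+2) * (-1)^(m+1)"
      using m by (simp add: sum.delta' if_distrib cong: if_cong)
    finally show ?thesis by (simp add: power_add)
  qed
  have tele: "(\<Sum>k=1..m. W (Suc k)) - (\<Sum>i=1..m. W i) = W (Suc m) - W 1"
    using sum_Suc_diff[of 1 m W] m by (simp add: sum_subtractf)
  have W1: "W 1 = a^m * z 2 / fact m" unfolding W_def by (simp add: numeral_2_eq_2)
  have Wm: "W (Suc m) = (-1)^m * z (m+2)" unfolding W_def by (simp add: power_add)
  have third: "(-1)^m / fact m * (\<Sum>k=1..m. real (m choose k) * (-1)^(k+1) * ((\<Sum>l=1..k. fact l * real (k choose l) * a^(m-l) * L (l+2)) - fact k * a^(m-k) * z (k+2)))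
     = - L (m+2) + (-1)^m * (\<Sum>k=1..m. W (Suc k))"
  proof -
    have split: "(\<Sum>k=1..m. real (m choose k) * (-1)^(k+1) * ((\<Sum>l=1..k. fact l * real (k choose l) * a^(m-l) * L (l+2)) - fact k * a^(m-k) * z (k+2)))
      = (\<Sum>k=1..m. real (m choose k) * (-1)^(k+1) * (\<Sum>l=1..k. fact l * real (k choose l) * a^(m-l) * L (l+2)))
        - (\<Sum>k=1..m. real (m choose k) * (-1)^(k+1) * (fact k * a^(m-k) * z (k+2)))"
      by (simp only: right_diff_distrib sum_subtractf)
    show ?thesis unfolding split unfolding right_diff_distrib P Q by simp
  qed
  show ?thesis unfolding M third
  proof -
    have "(-1)^m / fact m * z 2 * a^m - (-1)^m * (\<Sum>i=1..m. W i) + (- L (m+2) + (-1)^m * (\<Sum>k=1..m. W (Suc k)))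
       = (-1)^m * (a^m * z 2 / fact m + ((\<Sum>k=1..m. W (Suc k)) - (\<Sum>i=1..m. W i))) - L (m+2)"
      by (simp add: algebra_simps)
    also have "\<dots> = (-1)^m * (-1)^m * z (m+2) - L (m+2)" unfolding tele W1 Wm by (simp add: algebra_simps)
    also have "\<dots> = z (m+2) - L (m+2)" by (simp add: power_add[symmetric])
    finally show "z (m+2) - L (m+2) = (-1)^m / fact m * z 2 * a^m - (-1)^m * (\<Sum>i=1..m. W i) + (- L (m+2) + (-1)^m * (\<Sum>k=1..m. W (Suc k)))" by simp
  qed
qed


theorem theorem2p5:
  fixes m :: nat
  assumes "m \<ge> 1"
  shows "zeta_star [-1, -1] = (rzeta 2 + (ln 2) ^ 2) / 2
    \<and> zeta_star ((-1) # replicate m 1 @ [-1]) =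
      (-1) ^ m / fact m * rzeta 2 * (ln 2) ^ m
      - (-1) ^ m / fact (m + 1) *
        (\<Sum>i = 1..m. (-1) ^ (i + 1) * fact i * real ((m + 1) choose i) * (ln 2) ^ (m + 1 - i)
           * (zeta_star ((-1) # replicate (i - 1) 1 @ [-1]) - zeta_star ((-1) # replicate i 1)))
      + (-1) ^ m / fact m *
        (\<Sum>k = 1..m. real (m choose k) * (-1) ^ (k + 1) *
           ((\<Sum>l = 1..k. fact l * real (k choose l) * (ln 2) ^ (m - l) * polylog (l + 2) (1 / 2))
            - fact k * (ln 2) ^ (m - k) * rzeta (k + 2)))"
proof
  show "zeta_star [-1, -1] = (rzeta 2 + (ln 2) ^ 2) / 2"
    unfolding zeta_star_def using lim_C by (rule limI)
next
  have Av: "\<And>j. zeta_star ((-1) # replicate j 1 @ [-1]) = rzeta (j+2) - polylog (j+2) (1/2)"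
    unfolding zeta_star_def using lim_A by (rule limI)
  have Bv: "\<And>i. i \<ge> 1 \<Longrightarrow> zeta_star ((-1) # replicate i 1) = - polylog (i+1) (1/2)"
    unfolding zeta_star_def using lim_B by (rule limI)
  have S: "(\<Sum>i = 1..m. (-1) ^ (i + 1) * fact i * real ((m + 1) choose i) * (ln 2) ^ (m + 1 - i)
           * (zeta_star ((-1) # replicate (i - 1) 1 @ [-1]) - zeta_star ((-1) # replicate i 1)))
     = (\<Sum>i = 1..m. (-1) ^ (i + 1) * fact i * real ((m + 1) choose i) * (ln 2) ^ (m + 1 - i)
           * ((rzeta (i-1+2) - polylog (i-1+2) (1/2)) - (- polylog (i+1) (1/2))))"
  proof (rule sum.cong[OF refl])
    fix i assume "i \<in> {1..m}"
    then have "i \<ge> 1" by simp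
    then show "(-1) ^ (i + 1) * fact i * real ((m + 1) choose i) * (ln 2) ^ (m + 1 - i)
           * (zeta_star ((-1) # replicate (i - 1) 1 @ [-1]) - zeta_star ((-1) # replicate i 1))
       = (-1) ^ (i + 1) * fact i * real ((m + 1) choose i) * (ln 2) ^ (m + 1 - i)
           * ((rzeta (i-1+2) - polylog (i-1+2) (1/2)) - (- polylog (i+1) (1/2)))"
      using Av[of "i-1"] Bv[of i] by simp
  qed
  show "zeta_star ((-1) # replicate m 1 @ [-1]) =
      (-1) ^ m / fact m * rzeta 2 * (ln 2) ^ m
      - (-1) ^ m / fact (m + 1) *
        (\<Sum>i = 1..m. (-1) ^ (i + 1) * fact i * real ((m + 1) choose i) * (ln 2) ^ (m + 1 - i)
           * (zeta_star ((-1) # replicate (i - 1) 1 @ [-1]) - zeta_star ((-1) # replicate i 1)))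
      + (-1) ^ m / fact m *
        (\<Sum>k = 1..m. real (m choose k) * (-1) ^ (k + 1) *
           ((\<Sum>l = 1..k. fact l * real (k choose l) * (ln 2) ^ (m - l) * polylog (l + 2) (1 / 2))
            - fact k * (ln 2) ^ (m - k) * rzeta (k + 2)))"
    unfolding S Av[of m]
    by (rule alg[of m rzeta "\<lambda>s. polylog s (1/2)" "ln 2", OF assms])
qed

end
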